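(* Let $f: (\mathbb{R}^{+})^n \to (\mathbb{R}^{+})^n$ be homogeneous and monotone. If the associated graph $\mathcal{G}(f)$ is strongly connected, then $f$ has an eigenvector in $(\mathbb{R}^{+})^n$, i.e. there exist $x \in (\mathbb{R}^{+})^n$ and $\lambda \in \mathbb{R}^{+}$ with $f(x) = \lambda x$.
   Context: $\mathbb{R}^{+} = \{x \in \mathbb{R} : x > 0\}$. A map $f: (\mathbb{R}^{+})^n \to (\mathbb{R}^{+})^n$ is homogeneous if $f(\lambda x) = \lambda f(x)$ for all $\lambda \in \mathbb{R}^{+}$, $x \in (\mathbb{R}^{+})^n$, and monotone if $x \le y$ (componentwise) implies $f(x) \le f(y)$. For $u \in \mathbb{R}^{+}$ and $J \subseteq \{1,\dots,n\}$, $u_J \in (\mathbb{R}^{+})^n$ is the vector with $(u_J)_i = u$ if $i \in J$ and $(u_J)_i = 1$ otherwise. The associated graph $\mathcal{G}(f)$ is the directed graph on vertices $1,\dots,n$ with an edge from $i$ to $j$ iff $\lim_{u \to \infty} f_i(u_{\{j\}}) = \infty$. A directed graph is strongly connected if there is a directed path between any two distinct vertices. *)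

theory Defs
  imports "HOL-Analysis.Analysis"
begin

definition pos_vec :: "real ^ 'n \<Rightarrow> bool" where
  "pos_vec x \<longleftrightarrow> (\<forall>i. x $ i > 0)"

definition maps_pos :: "(real ^ 'n \<Rightarrow> real ^ 'n) \<Rightarrow> bool" where
  "maps_pos f \<longleftrightarrow> (\<forall>x. pos_vec x \<longrightarrow> pos_vec (f x))"

definition homogeneous_map :: "(real ^ 'n \<Rightarrow> real ^ 'n) \<Rightarrow> bool" where
  "homogeneous_map f \<longleftrightarrow>
     (\<forall>l x. l > 0 \<longrightarrow> pos_vec x \<longrightarrow> f (l *\<^sub>R x) = l *\<^sub>R f x)"

definition monotone_map :: "(real ^ 'n \<Rightarrow> real ^ 'n) \<Rightarrow> bool" where
  "monotone_map f \<longleftrightarrow>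
     (\<forall>x y. pos_vec x \<longrightarrow> pos_vec y \<longrightarrow> (\<forall>i. x $ i \<le> y $ i) \<longrightarrow>
        (\<forall>i. f x $ i \<le> f y $ i))"

definition uvec :: "real \<Rightarrow> 'n set \<Rightarrow> real ^ 'n" where
  "uvec u J = (\<chi> i. if i \<in> J then u else 1)"

definition assoc_graph :: "(real ^ 'n \<Rightarrow> real ^ 'n) \<Rightarrow> ('n \<times> 'n) set" where
  "assoc_graph f = {(i, j). filterlim (\<lambda>u. f (uvec u {j}) $ i) at_top at_top}"

definition strongly_connected_rel :: "('n \<times> 'n) set \<Rightarrow> bool" where
  "strongly_connected_rel E \<longleftrightarrow> (\<forall>i j. i \<noteq> j \<longrightarrow> (i, j) \<in> E\<^sup>+)"

end

theory Submission
  imports Defs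
begin

lemma scale_le:
  fixes f :: "real ^ 'n \<Rightarrow> real ^ 'n"
  assumes hom: "homogeneous_map f" and mon: "monotone_map f"
    and px: "pos_vec x" and py: "pos_vec y" and a: "a > 0"
    and le: "\<And>k. y $ k \<le> a * x $ k"
  shows "f y $ i \<le> a * f x $ i"
proof -
  have pa: "pos_vec (a *\<^sub>R x)" using px a by (simp add: pos_vec_def)
  have "f y $ i \<le> f (a *\<^sub>R x) $ i"
    using mon py pa le unfolding monotone_map_def by auto
  also have "\<dots> = a * f x $ i" using hom a px unfolding homogeneous_map_def by simp
  finally show ?thesis .
qed

lemma pos_min:
  fixes x :: "real ^ 'n"
  assumes "pos_vec x"
  shows "\<exists>m>0. \<forall>k. m \<le> x $ k"
proof -
  let ?m = "Min (range (\<lambda>k. x $ k))"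
  have "?m \<in> range (\<lambda>k. x $ k)" by (intro Min_in) auto
  then have "?m > 0" using assms by (auto simp: pos_vec_def)
  moreover have "\<forall>k. ?m \<le> x $ k" by simp
  ultimately show ?thesis by blast
qed

lemma cont_f:
  fixes f :: "real ^ 'n \<Rightarrow> real ^ 'n"
  assumes mp: "maps_pos f" and hom: "homogeneous_map f" and mon: "monotone_map f"
  shows "continuous_on {x. pos_vec x} f"
proof -
  have "continuous_on {x. pos_vec x} (\<lambda>x. f x $ i)" for i
    unfolding continuous_on_iff
  proof (intro ballI allI impI)
    fix x :: "real ^ 'n" and e assume "x \<in> {x. pos_vec x}" and e: "(e::real) > 0"
    then have px: "pos_vec x" by simp
    obtain m where m: "m > 0" "\<forall>k. m \<le> x $ k" using pos_min[OF px] by blast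
    define c where "c = f x $ i"
    have c: "c > 0" using mp px unfolding c_def maps_pos_def pos_vec_def by auto
    define \<eta> where "\<eta> = min 1 (e / (4 * c))"
    have eta: "\<eta> > 0" "\<eta> \<le> 1" "\<eta> * c \<le> e / 4" using e c unfolding \<eta>_def
      by (auto simp: min_def field_simps)
    define d where "d = \<eta> * m / 2"
    have d: "d > 0" using eta m by (simp add: d_def)
    show "\<exists>d>0. \<forall>y\<in>{x. pos_vec x}. dist y x < d \<longrightarrow> dist (f y $ i) (f x $ i) < e"
    proof (intro exI[of _ d] conjI ballI impI d)
      fix y :: "real ^ 'n" assume "y \<in> {x. pos_vec x}" and dy: "dist y x < d"
      then have py: "pos_vec y" by simp
      have comp: "\<bar>y $ k - x $ k\<bar> < d" for k
        using dy component_le_norm_cart[of "y - x" k] by (simp add: dist_norm)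
      have "y $ k \<le> (1 + \<eta>) * x $ k" for k
      proof -
        have "\<eta> * m \<le> \<eta> * x $ k" using m eta by (simp add: mult_left_mono)
        moreover have "\<eta> * m > 0" using m eta by simp
        ultimately have "d \<le> \<eta> * x $ k" unfolding d_def by linarith
        then show ?thesis using comp[of k] by (simp add: algebra_simps)
      qed
      then have up: "f y $ i \<le> (1 + \<eta>) * c"
        unfolding c_def using scale_le[OF hom mon px py] eta by simp
      have "x $ k \<le> (1 + \<eta>) * y $ k" for k
      proof -
        have h1: "(1 + \<eta>) * d \<le> \<eta> * m" using eta m d unfolding d_def
          by (simp add: field_simps)
        have "y $ k > x $ k - d" using comp[of k] by simp
        then have "(1 + \<eta>) * y $ k \<ge> (1 + \<eta>) * (x $ k - d)" using eta
          by (intro mult_left_mono) auto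
        moreover have "\<eta> * m \<le> \<eta> * x $ k" using eta m by (simp add: mult_left_mono)
        ultimately show ?thesis using h1 by (simp add: algebra_simps)
      qed
      then have lo: "c \<le> (1 + \<eta>) * f y $ i"
        unfolding c_def using scale_le[OF hom mon py px] eta by simp
      have "c - f y $ i \<le> \<eta> * f y $ i" using lo by (simp add: algebra_simps)
      also have "\<dots> \<le> \<eta> * ((1 + \<eta>) * c)" using up eta by (simp add: mult_left_mono)
      also have "\<dots> \<le> 2 * (\<eta> * c)"
      proof -
        have "\<eta> * (\<eta> * c) \<le> 1 * (\<eta> * c)" using eta c by (intro mult_right_mono) auto
        then show ?thesis by (simp add: algebra_simps)
      qed
      finally have "c - f y $ i \<le> e/2" using eta by simp
      moreover have "f y $ i - c \<le> e/4" using up eta by (simp add: algebra_simps)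
      ultimately have "\<bar>f y $ i - c\<bar> < e" using e by linarith
      then show "dist (f y $ i) (f x $ i) < e"
        by (simp add: dist_real_def c_def)
    qed
  qed
  then have "continuous_on {x. pos_vec x} (\<lambda>x. \<chi> i. f x $ i)"
    by (intro continuous_on_vec_lambda)
  then show ?thesis by simp
qed

definition inS :: "(real ^ 'n \<Rightarrow> real ^ 'n) \<Rightarrow> real \<Rightarrow> real ^ 'n \<Rightarrow> real \<Rightarrow> real \<Rightarrow> bool" where
  "inS f L x m \<mu> \<longleftrightarrow> pos_vec x \<and> m > 0 \<and> (\<forall>k. m \<le> x $ k) \<and> 0 < \<mu> \<and> \<mu> \<le> L
      \<and> (\<forall>i. f x $ i \<le> \<mu> * x $ i)"

lemma edge_bound:
  fixes f :: "real ^ 'n \<Rightarrow> real ^ 'n"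
  assumes hom: "homogeneous_map f" and mon: "monotone_map f"
    and e: "(i, j) \<in> assoc_graph f"
  shows "\<exists>U. \<forall>x m \<mu>. inS f L x m \<mu> \<and> x $ i \<le> t * m \<longrightarrow> x $ j \<le> U * m"
proof -
  let ?g = "\<lambda>u. f (uvec u {j}) $ i"
  have "filterlim ?g at_top at_top" using e by (simp add: assoc_graph_def)
  then have "eventually (\<lambda>u. L * t + 1 \<le> ?g u) at_top"
    by (simp add: filterlim_at_top)
  then obtain N where N: "\<And>u. u \<ge> N \<Longrightarrow> L * t + 1 \<le> ?g u"
    by (auto simp: eventually_at_top_linorder)
  show ?thesis
  proof (intro exI[of _ N] allI impI)
    fix x :: "real ^ 'n" and m \<mu>
    assume "inS f L x m \<mu> \<and> x $ i \<le> t * m"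
    then have px: "pos_vec x" and m: "m > 0" "\<forall>k. m \<le> x $ k" and mu: "0 < \<mu>" "\<mu> \<le> L"
      and fx: "\<forall>i. f x $ i \<le> \<mu> * x $ i" and xi: "x $ i \<le> t * m"
      by (auto simp: inS_def)
    show "x $ j \<le> N * m"
    proof (rule ccontr)
      assume "\<not> x $ j \<le> N * m"
      then have "x $ j / m \<ge> N" using m by (simp add: field_simps)
      then have g1: "L * t + 1 \<le> ?g (x $ j / m)" by (rule N)
      define u where "u = x $ j / m"
      have u: "u > 0" using px m by (simp add: u_def pos_vec_def)
      have pu: "pos_vec (uvec u {j})" using u by (simp add: pos_vec_def uvec_def)
      have pmu: "pos_vec (m *\<^sub>R uvec u {j})" using u m by (simp add: pos_vec_def uvec_def)
      have "\<forall>k. (m *\<^sub>R uvec u {j}) $ k \<le> x $ k"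
        using m by (simp add: uvec_def u_def)
      then have "f (m *\<^sub>R uvec u {j}) $ i \<le> f x $ i"
        using mon pmu px unfolding monotone_map_def by blast
      moreover have "f (m *\<^sub>R uvec u {j}) = m *\<^sub>R f (uvec u {j})"
        using hom m pu unfolding homogeneous_map_def by blast
      ultimately have "m * ?g u \<le> f x $ i" by simp
      also have "\<dots> \<le> \<mu> * x $ i" using fx by blast
      also have "\<dots> \<le> \<mu> * (t * m)" using xi mu by (simp add: mult_left_mono)
      also have "\<dots> \<le> L * (t * m)"
      proof -
        have "x $ i > 0" using px by (simp add: pos_vec_def)
        then have "t * m \<ge> 0" using xi by linarith
        then show ?thesis using mu by (simp add: mult_right_mono)
      qed
      finally have "m * ?g u \<le> m * (L * t)" by (simp add: algebra_simps)
      then have "?g u \<le> L * t" using m by simp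
      then show False using g1 u_def by simp
    qed
  qed
qed

lemma path_bound:
  fixes f :: "real ^ 'n \<Rightarrow> real ^ 'n"
  assumes hom: "homogeneous_map f" and mon: "monotone_map f"
    and p: "(a, b) \<in> (assoc_graph f)\<^sup>+"
  shows "\<forall>t. \<exists>U. \<forall>x m \<mu>. inS f L x m \<mu> \<and> x $ a \<le> t * m \<longrightarrow> x $ b \<le> U * m"
  using p
proof (induction rule: trancl_induct)
  case (base y)
  then show ?case using edge_bound[OF hom mon] by blast
next
  case (step y z)
  show ?case
  proof
    fix t
    obtain U where U: "\<forall>x m \<mu>. inS f L x m \<mu> \<and> x $ a \<le> t * m \<longrightarrow> x $ y \<le> U * m"
      using step.IH by blast
    obtain V where V: "\<forall>x m \<mu>. inS f L x m \<mu> \<and> x $ y \<le> U * m \<longrightarrow> x $ z \<le> V * m"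
      using edge_bound[OF hom mon step.hyps(2)] by blast
    show "\<exists>U. \<forall>x m \<mu>. inS f L x m \<mu> \<and> x $ a \<le> t * m \<longrightarrow> x $ z \<le> U * m"
      using U V by blast
  qed
qed


theorem theorem2:
  fixes f :: "real ^ 'n \<Rightarrow> real ^ 'n"
  assumes "maps_pos f"
    and "homogeneous_map f"
    and "monotone_map f"
    and "strongly_connected_rel (assoc_graph f)"
  shows "\<exists>x l. pos_vec x \<and> l > 0 \<and> f x = l *\<^sub>R x"
proof -
  note mp = assms(1) and hom = assms(2) and mon = assms(3) and sc = assms(4)
  define one :: "real ^ 'n" where "one = (\<chi> i. 1)"
  have pone: "pos_vec one" by (simp add: one_def pos_vec_def)
  have fone: "f one $ i > 0" for i using mp pone by (auto simp: maps_pos_def pos_vec_def)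
  define F where "F = (\<Sum>i\<in>UNIV. f one $ i)"
  have F: "F > 0" unfolding F_def using fone by (intro sum_pos) auto
  define n where "n = real CARD('n)"
  have n: "n \<ge> 1" by (simp add: n_def Suc_le_eq)
  define L where "L = F + n"
  have ex: "\<forall>a k. \<exists>\<beta>. a \<noteq> k \<longrightarrow> (\<forall>x m \<mu>. inS f L x m \<mu> \<and> x $ a \<le> 1 * m \<longrightarrow> x $ k \<le> \<beta> * m)"
  proof (intro allI)
    fix a k :: 'n
    show "\<exists>\<beta>. a \<noteq> k \<longrightarrow> (\<forall>x m \<mu>. inS f L x m \<mu> \<and> x $ a \<le> 1 * m \<longrightarrow> x $ k \<le> \<beta> * m)"
    proof (cases "a = k")
      case False
      then have "(a, k) \<in> (assoc_graph f)\<^sup>+" using sc by (simp add: strongly_connected_rel_def)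
      from path_bound[OF hom mon this, of L] show ?thesis by blast
    qed simp
  qed
  define \<beta> where "\<beta> a k = (SOME b. a \<noteq> k \<longrightarrow> (\<forall>x m \<mu>. inS f L x m \<mu> \<and> x $ a \<le> 1 * m \<longrightarrow> x $ k \<le> b * m))" for a k
  have \<beta>: "\<forall>x m \<mu>. inS f L x m \<mu> \<and> x $ a \<le> 1 * m \<longrightarrow> x $ k \<le> \<beta> a k * m" if "a \<noteq> k" for a k
  proof -
    have "a \<noteq> k \<longrightarrow> (\<forall>x m \<mu>. inS f L x m \<mu> \<and> x $ a \<le> 1 * m \<longrightarrow> x $ k \<le> \<beta> a k * m)"
      unfolding \<beta>_def by (rule someI_ex) (use ex in blast)
    then show ?thesis using that by blast
  qed
  define D where "D = 1 + (\<Sum>a\<in>UNIV. \<Sum>k\<in>UNIV. \<bar>\<beta> a k\<bar>)"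
  have D1: "D \<ge> 1" unfolding D_def by (simp add: sum_nonneg)
  have Dge: "\<beta> a k \<le> D" for a k
  proof -
    have "\<bar>\<beta> a k\<bar> \<le> (\<Sum>k\<in>UNIV. \<bar>\<beta> a k\<bar>)" by (rule member_le_sum) auto
    also have "\<dots> \<le> (\<Sum>a\<in>UNIV. \<Sum>k\<in>UNIV. \<bar>\<beta> a k\<bar>)"
      by (rule member_le_sum[where f = "\<lambda>a. \<Sum>k\<in>UNIV. \<bar>\<beta> a k\<bar>"]) (auto simp: sum_nonneg)
    finally show ?thesis unfolding D_def by linarith
  qed
  have key: "x $ k \<le> D * m" if "inS f L x m \<mu>" "x $ a = m" for x :: "real ^ 'n" and m \<mu> a k
  proof (cases "a = k")
    case True
    then show ?thesis using that D1 by (simp add: inS_def)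
  next
    case False
    then have "x $ k \<le> \<beta> a k * m" using \<beta>[OF False] that by auto
    also have "\<dots> \<le> D * m" using Dge that by (intro mult_right_mono) (auto simp: inS_def)
    finally show ?thesis .
  qed
  define C where "C = n^2 * D^2 / F + 1"
  have C: "C \<ge> 1" unfolding C_def using F by simp
  have CF: "C * F > 0" using C F by simp
  have CFn1: "C * F + n \<ge> 1" using CF n by linarith
  have CFn: "C * F + n > 0" using CFn1 by linarith
  define r where "r = 1 / (C * F + n)"
  have r: "r > 0" "r \<le> 1" using CFn CFn1 unfolding r_def by auto
  define K :: "(real ^ 'n) set" where "K = cbox (\<chi> i. r) (\<chi> i. (1::real))"
  have memK: "x \<in> K \<longleftrightarrow> (\<forall>i. r \<le> x $ i \<and> x $ i \<le> 1)" for x :: "real ^ 'n"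
    unfolding K_def mem_box_cart(2) by simp
  define s where "s x = (\<Sum>j\<in>UNIV. x $ j)" for x :: "real ^ 'n"
  define T where "T x = (\<chi> i. max (f x $ i) (s x / C))" for x :: "real ^ 'n"
  define P where "P x = (1 / s (T x)) *\<^sub>R T x" for x :: "real ^ 'n"
  have Kpos: "pos_vec x" if "x \<in> K" for x :: "real ^ 'n" using that r memK unfolding pos_vec_def by (meson less_le_trans)
  have spos: "s x > 0" if "pos_vec x" for x :: "real ^ 'n"
    unfolding s_def using that by (intro sum_pos) (auto simp: pos_vec_def)
  have Tlo: "T x $ i \<ge> s x / C" for x :: "real ^ 'n" and i by (simp add: T_def)
  have Tpos: "T x $ i > 0" if "pos_vec x" for x :: "real ^ 'n" and i
  proof -
    have "s x / C > 0" using spos[OF that] C by simp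
    then show ?thesis using Tlo[of x i] by linarith
  qed
  have sTpos: "s (T x) > 0" if "pos_vec x" for x :: "real ^ 'n"
    unfolding s_def using Tpos[OF that] by (intro sum_pos) auto
  have Tle: "T x $ i \<le> s (T x)" if "pos_vec x" for x :: "real ^ 'n" and i
    unfolding s_def using Tpos[OF that] by (intro member_le_sum) (auto intro: less_imp_le)
  have fle: "f x $ i \<le> s x * f one $ i" if "pos_vec x" for x :: "real ^ 'n" and i
  proof (rule scale_le[OF hom mon pone that spos[OF that]])
    fix k show "x $ k \<le> s x * one $ k"
      unfolding s_def one_def using that by (simp, intro member_le_sum) (auto simp: pos_vec_def less_imp_le)
  qed
  have sTle: "s (T x) \<le> s x * (F + n / C)" if "pos_vec x" for x :: "real ^ 'n"
  proof -
    have "s (T x) \<le> (\<Sum>i\<in>UNIV. s x * f one $ i + s x / C)"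
      unfolding s_def[of "T x"]
    proof (rule sum_mono)
      fix i show "T x $ i \<le> s x * f one $ i + s x / C"
        proof -
        have "s x / C \<ge> 0" using spos[OF that] C by simp
        moreover have "s x * f one $ i \<ge> 0" using spos[OF that] fone[of i] by simp
        moreover note fle[OF that, of i]
        ultimately have "max (f x $ i) (s x / C) \<le> s x * f one $ i + s x / C"
          by linarith
        then show ?thesis by (simp add: T_def)
      qed
    qed
    also have "\<dots> = s x * (F + n / C)"
      by (simp add: sum.distrib F_def n_def sum_distrib_left algebra_simps)
    finally show ?thesis .
  qed
  have Pcomp: "P x $ i = T x $ i / s (T x)" for x :: "real ^ 'n" and i by (simp add: P_def)
  have PK: "P x \<in> K" if "x \<in> K" for x :: "real ^ 'n"
  proof -
    have px: "pos_vec x" using Kpos[OF that] .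
    have "r \<le> P x $ i \<and> P x $ i \<le> 1" for i
    proof
      have "r * s (T x) \<le> r * (s x * (F + n / C))" using sTle[OF px] r by (simp add: mult_left_mono)
      also have "\<dots> = s x / C"
      proof -
        have "s x * (F + n / C) = (s x / C) * (C * F + n)" using C by (simp add: field_simps)
        then show ?thesis unfolding r_def using CFn by simp
      qed
      also have "\<dots> \<le> T x $ i" by (rule Tlo)
      finally show "r \<le> P x $ i" unfolding Pcomp using sTpos[OF px] by (simp add: pos_le_divide_eq)
      show "P x $ i \<le> 1" unfolding Pcomp using sTpos[OF px] Tle[OF px] by simp
    qed
    then show ?thesis by (simp add: memK)
  qed
  have contf: "continuous_on K f"
    using cont_f[OF mp hom mon] by (rule continuous_on_subset) (auto intro: Kpos)
  have contT: "continuous_on K T"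
    unfolding T_def s_def
    by (intro continuous_intros contf) (use C in auto)
  have c1: "continuous_on K (\<lambda>x. s (T x))" unfolding s_def by (intro continuous_intros contT)
  have nz: "\<forall>x\<in>K. s (T x) \<noteq> 0" using sTpos Kpos by (metis less_irrefl)
  have c2: "continuous_on K (\<lambda>x. 1 / s (T x))" by (rule continuous_on_divide) (use c1 nz in auto)
  have contP: "continuous_on K P"
    unfolding P_def by (intro continuous_on_scaleR c2 contT)
  have "(\<chi> i. r) \<in> K" using r by (simp add: memK)
  then have Kne: "K \<noteq> {}" by blast
  have cK: "compact K" unfolding K_def by (rule compact_cbox)
  have vK: "convex K" unfolding K_def by (rule convex_box)
  have PKK: "P \<in> K \<rightarrow> K" using PK by blast
  obtain x where xK: "x \<in> K" and fp: "P x = x"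
    using brouwer[OF cK vK Kne contP PKK] by blast
  have px: "pos_vec x" using Kpos[OF xK] .
  define \<sigma> where "\<sigma> = s (T x)"
  have sig: "\<sigma> > 0" using sTpos[OF px] by (simp add: \<sigma>_def)
  have Tx: "T x $ i = \<sigma> * x $ i" for i
  proof -
    have "x $ i = P x $ i" using fp by simp
    then have "x $ i = T x $ i / \<sigma>" using Pcomp[of x i] by (simp add: \<sigma>_def)
    then show ?thesis using sig by (simp add: field_simps)
  qed
  have sx: "s x = 1"
  proof -
    have "\<sigma> * s x = (\<Sum>j\<in>UNIV. \<sigma> * x $ j)" by (simp add: s_def sum_distrib_left)
    also have "\<dots> = (\<Sum>j\<in>UNIV. T x $ j)" using Tx by simp
    also have "\<dots> = \<sigma>" unfolding \<sigma>_def s_def ..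
    finally show ?thesis using sig by simp
  qed
  define m where "m = Min (range (\<lambda>k. x $ k))"
  have m: "m \<in> range (\<lambda>k. x $ k)" "\<forall>k. m \<le> x $ k"
    unfolding m_def by (intro Min_in) auto
  then obtain a where a: "x $ a = m" by auto
  have m0: "m > 0" using px a by (auto simp: pos_vec_def)
  have sigL: "\<sigma> \<le> L"
  proof -
    have "\<sigma> \<le> F + n / C" using sTle[OF px] sx by (simp add: \<sigma>_def)
    also have "n / C \<le> n"
    proof -
      have "n * 1 \<le> n * C" using C n by (intro mult_left_mono) auto
      then show ?thesis using C by (simp add: divide_le_eq)
    qed
    finally show ?thesis unfolding L_def by simp
  qed
  have fxT: "f x $ i \<le> \<sigma> * x $ i" for i using Tx[of i] by (simp add: T_def)
  have inS: "inS f L x m \<sigma>" unfolding inS_def using px m0 m sig sigL fxT by auto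
  have xD: "x $ k \<le> D * m" for k using key[OF inS a] .
  have nDm: "1 \<le> n * D * m"
  proof -
    have "1 = s x" using sx by simp
    also have "\<dots> \<le> (\<Sum>j::'n\<in>UNIV. D * m)" using sum_mono[of UNIV "\<lambda>j. x $ j" "\<lambda>j::'n. D * m"] xD unfolding s_def by blast
    also have "\<dots> = n * D * m" by (simp add: n_def)
    finally show ?thesis .
  qed
  have sigF: "m * F \<le> \<sigma>"
  proof -
    have "m * f one $ i \<le> f x $ i" for i
    proof -
      have "f one $ i \<le> (1 / m) * f x $ i"
      proof (rule scale_le[OF hom mon px pone])
        show "1 / m > 0" using m0 by simp
        fix k show "one $ k \<le> 1 / m * x $ k" using m m0 by (simp add: one_def field_simps)
      qed
      then show ?thesis using m0 by (simp add: field_simps)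
    qed
    then have "m * F \<le> (\<Sum>i\<in>UNIV. f x $ i)" unfolding F_def sum_distrib_left by (rule sum_mono)
    also have "\<dots> \<le> (\<Sum>i\<in>UNIV. T x $ i)" by (rule sum_mono) (simp add: T_def)
    finally show ?thesis unfolding \<sigma>_def s_def .
  qed
  have big: "f x $ i \<ge> 1 / C" for i
  proof (rule ccontr)
    assume "\<not> f x $ i \<ge> 1 / C"
    then have "T x $ i = 1 / C" using sx by (simp add: T_def)
    then have e1: "\<sigma> * x $ i = 1 / C" using Tx by simp
    have "F * m * m \<le> \<sigma> * m" using sigF m0 by (simp add: mult_right_mono mult.commute)
    also have "\<dots> \<le> \<sigma> * x $ i" using m sig by (simp add: mult_left_mono)
    finally have h1: "C * (F * m * m) \<le> 1" using e1 C by (simp add: field_simps)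
    have h2: "1 * 1 \<le> (n * D * m) * (n * D * m)" using nDm by (intro mult_mono) auto
    have "C * (F * m * m) = (n * D * m) * (n * D * m) + F * m * m"
      unfolding C_def using F by (simp add: field_simps power2_eq_square)
    moreover have "F * m * m > 0" using F m0 by simp
    ultimately show False using h1 h2 by linarith
  qed
  have "f x = \<sigma> *\<^sub>R x"
  unfolding vec_eq_iff
  proof
    fix i
    have "f x $ i = T x $ i" using big[of i] sx by (simp add: T_def)
    then show "f x $ i = (\<sigma> *\<^sub>R x) $ i" using Tx by simp
  qed
  then show ?thesis using px sig by blast
qed

end
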